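(* Let $X_n$ be the final altitude of a uniformly random Dyck meander with catastrophes of length $n$. Then $X_n$ admits a geometric limit distribution: $\Pr(X_n=k)\sim(1-\lambda)\lambda^k$, where $\lambda=v_1(\rho_0)^{-1}\approx0.6823278$ is the unique real positive root of $\lambda^3+\lambda-1$, namely $\lambda=\frac16\big(108+12\sqrt{93}\big)^{1/3}-2\big(108+12\sqrt{93}\big)^{-1/3}$.
   Context: Dyck paths with catastrophes: paths starting at altitude $0$, never going below $0$, with steps $+1$, $-1$, and catastrophes (a step from an altitude $h\ge2$ directly to altitude $0$); meanders may end at any altitude; length = number of steps; the final altitude is the altitude of the endpoint. Here $v_1(z)=\frac{1+\sqrt{1-4z^2}}{2z}$ is the large root of $1-z(u^{-1}+u)=0$, and $\rho_0\approx0.46557$ is the unique positive root of $\rho_0^3+2\rho_0^2+\rho_0-1$. *)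

theory Defs
  imports Complex_Main
begin

datatype step = Up | Down | Cat

fun walk :: "nat \<Rightarrow> step list \<Rightarrow> nat option" where
  "walk h [] = Some h"
| "walk h (Up # s) = walk (Suc h) s"
| "walk h (Down # s) = (if h \<ge> 1 then walk (h - 1) s else None)"
| "walk h (Cat # s) = (if h \<ge> 2 then walk 0 s else None)"

definition meanders :: "nat \<Rightarrow> step list set" where
  "meanders n = {w. length w = n \<and> walk 0 w \<noteq> None}"

definition final_alt_prob :: "nat \<Rightarrow> nat \<Rightarrow> real" where
  "final_alt_prob n k =
     real (card {w \<in> meanders n. walk 0 w = Some k}) / real (card (meanders n))"

definition v1 :: "real \<Rightarrow> real" where
  "v1 z = (1 + sqrt (1 - 4 * z^2)) / (2 * z)"

definition rho0 :: real where
  "rho0 = (THE r. r > 0 \<and> r^3 + 2 * r^2 + r - 1 = 0)"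

end

theory Submission
  imports Defs "HOL-Analysis.Analysis" "HOL-Library.Diagonal_Subsequence"
begin


lemma lam_facts:
  fixes lam :: real
  defines "lam \<equiv> root 3 (108 + 12 * sqrt 93) / 6 - 2 / root 3 (108 + 12 * sqrt 93)"
  shows "lam > 0 \<and> lam^3 + lam - 1 = 0"
proof -
  define a where "a = root 3 (108 + 12 * sqrt 93)"
  have s: "sqrt 93 ^ 2 = 93" by simp
  have s0: "sqrt 93 \<ge> 0" by simp
  have a3: "a^3 = 108 + 12 * sqrt 93" unfolding a_def
    by (subst real_root_pow_pos2) (auto)
  have a0: "0 \<le> a" unfolding a_def by simp
  have "9 < sqrt 93" by (rule real_less_rsqrt) simp
  hence "6^3 < a^3" using a3 by simp
  hence a6: "6 < a" by (rule power_less_imp_less_base[OF _ a0])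
  hence apos: "a > 0" by simp
  have l: "lam = (a^2 - 12)/(6*a)" unfolding lam_def a_def[symmetric] using apos
    by (simp add: field_simps power2_eq_square)
  have a6e: "a^6 = (a^3)^2" by (simp add: power_mult[symmetric])
  have e: "a^6 - 216 * a^3 - 1728 = 0"
    unfolding a6e a3 using s by (simp add: power2_eq_square algebra_simps)
  have c: "(a^2 - 12)^3 = a^6 - 36 * a^4 + 432 * a^2 - 1728"
    by (simp add: power3_eq_cube power2_eq_square algebra_simps power_def numeral_eq_Suc)
  have "lam^3 = (a^2 - 12)^3 / (216 * a^3)" unfolding l by (simp add: power_divide power_mult_distrib)
  hence "216 * a^3 * lam^3 = a^6 - 36 * a^4 + 432 * a^2 - 1728" using apos c by simp
  moreover have "216 * a^3 * lam = 36 * a^4 - 432 * a^2" unfolding l using apos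
    by (simp add: field_simps power2_eq_square power3_eq_cube power_def numeral_eq_Suc)
  ultimately have "216*a^3*(lam^3 + lam - 1) = a^6 - 216 * a^3 - 1728"
    by (simp add: algebra_simps)
  hence "lam^3 + lam - 1 = 0" using e apos by simp
  moreover have "lam > 0"
  proof -
    have "a^2 > 6^2" using a6 by (intro power_strict_mono) auto
    thus ?thesis unfolding l using apos by simp
  qed
  ultimately show ?thesis by simp
qed


lemma cube_mono_uniq:
  fixes x y :: real
  assumes "x > 0" "y > 0" "x^3 + x - 1 = 0" "y^3 + y - 1 = 0"
  shows "x = y"
proof (rule ccontr)
  assume "x \<noteq> y"
  then consider "x < y" | "y < x" by linarith
  thus False
  proof cases
    case 1 then have "x^3 < y^3" using assms by (intro power_strict_mono) auto
    thus False using assms 1 by linarith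
  next
    case 2 then have "y^3 < x^3" using assms by (intro power_strict_mono) auto
    thus False using assms 2 by linarith
  qed
qed

lemma lam_bounds:
  fixes l :: real
  assumes "l > 0" "l^3 + l - 1 = 0"
  shows "l > 1/2" "l^2 < 1/2" "l < 1"
proof -
  show "l < 1" using assms by (smt (verit) power_less_one_iff zero_le_power)
  show "l > 1/2"
  proof (rule ccontr)
    assume "\<not> l > 1/2" hence "l \<le> 1/2" by simp
    hence "l^3 \<le> (1/2)^3" using assms by (intro power_mono) auto
    hence "l^3 \<le> 1/8" by (simp add: power_divide)
    thus False using assms \<open>l \<le> 1/2\<close> by linarith
  qed
  show "l^2 < 1/2"
  proof (rule ccontr)
    assume "\<not> l^2 < 1/2" hence h: "l^2 \<ge> 1/2" by simp
    have "l^3 = l * l^2" by (simp add: power_def numeral_eq_Suc)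
    hence "l^3 \<ge> l/2" using h assms by (simp add: mult_left_mono[of "1/2" "l^2" l, simplified])
    hence "l + l/2 \<le> 1" using assms by linarith
    hence "l \<le> 2/3" by simp
    hence "l^2 \<le> (2/3)^2" using assms by (intro power_mono) auto
    hence "l^2 \<le> 4/9" by (simp add: power2_eq_square)
    thus False using h by linarith
  qed
qed

lemma rho0_eq:
  fixes l :: real
  assumes "l > 0" "l^3 + l - 1 = 0"
  shows "rho0 = l^2"
proof -
  have key: "(l^2)^3 + 2*(l^2)^2 + l^2 - 1 = (l^3+l+1)*(l^3+l-1)"
    by (simp add: algebra_simps power_def numeral_eq_Suc)
  have ex: "l^2 > 0 \<and> (l^2)^3 + 2*(l^2)^2 + l^2 - 1 = 0" using assms key by simp
  have un: "r = l^2" if "r > 0 \<and> r^3 + 2*r^2 + r - 1 = 0" for r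
  proof (rule ccontr)
    assume "r \<noteq> l^2"
    then consider "r < l^2" | "l^2 < r" by linarith
    thus False
    proof cases
      case 1
      have "r^3 < (l^2)^3" using 1 that by (intro power_strict_mono) auto
      moreover have "r^2 < (l^2)^2" using 1 that by (intro power_strict_mono) auto
      ultimately show False using that ex 1 by linarith
    next
      case 2
      have "r^3 > (l^2)^3" using 2 that assms by (intro power_strict_mono) auto
      moreover have "r^2 > (l^2)^2" using 2 that assms by (intro power_strict_mono) auto
      ultimately show False using that ex 2 by linarith
    qed
  qed
  show ?thesis unfolding rho0_def using ex un by (rule the_equality)
qed

lemma v1_rho0:
  fixes l :: real
  assumes "l > 0" "l^3 + l - 1 = 0"
  shows "l = inverse (v1 rho0)"
proof -
  have b: "l > 1/2" using lam_bounds assms by auto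
  have h4: "l^4 = l - l^2"
  proof -
    have "l^4 = l * l^3" by (simp add: power_def numeral_eq_Suc)
    also have "l^3 = 1 - l" using assms by linarith
    finally show ?thesis by (simp add: algebra_simps power2_eq_square)
  qed
  have "(l^2)^2 = l^4" by (simp add: power_mult[symmetric])
  hence "1 - 4*(l^2)^2 = (2*l - 1)^2" using h4
    by (simp add: power2_eq_square algebra_simps)
  hence "sqrt (1 - 4*(l^2)^2) = 2*l - 1" using b by simp
  hence "v1 (l^2) = 1/l" unfolding v1_def using assms by (simp add: field_simps power2_eq_square)
  thus ?thesis using rho0_eq[OF assms] by (simp add: inverse_eq_divide)
qed


fun cp :: "nat \<Rightarrow> nat \<Rightarrow> nat" where
  "cp 0 k = (if k = 0 then 1 else 0)"
| "cp (Suc n) k = (if k \<ge> 1 then cp n (k-1) else 0) + cp n (Suc k)"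

fun cG :: "nat \<Rightarrow> nat \<Rightarrow> nat" where
  "cG 0 k = (if k = 0 then 1 else 0)"
| "cG (Suc n) k = (if k \<ge> 1 then cG n (k-1) else 0) + cG n (Suc k)
     + (if k = 0 then (\<Sum>h\<in>{2..n}. cG n h) else 0)"

definition cg :: "nat \<Rightarrow> nat" where "cg j = (\<Sum>h\<in>{2..j}. cp j h)"
definition Ptot :: "nat \<Rightarrow> nat" where "Ptot n = (\<Sum>k\<le>n. cp n k)"
definition cT :: "nat \<Rightarrow> nat" where "cT n = (\<Sum>k\<le>n. cG n k)"

lemma cp_gt: "n < k \<Longrightarrow> cp n k = 0"
  by (induction n arbitrary: k) auto

lemma cG_gt: "n < k \<Longrightarrow> cG n k = 0"
  by (induction n arbitrary: k) auto

lemma cp_le: "cp n k \<le> 2^n"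
proof (induction n arbitrary: k)
  case 0 then show ?case by simp
next
  case (Suc n)
  have "cp (Suc n) k \<le> 2^n + 2^n" using Suc[of "k-1"] Suc[of "Suc k"] by simp
  thus ?case by simp
qed

lemma cp_diag: "cp n n = 1"
  by (induction n) (auto simp: cp_gt)

lemma Ptot_rec: "Ptot (Suc n) + cp n 0 = 2 * Ptot n"
proof -
  have a: "(\<Sum>k\<le>Suc n. (if k \<ge> 1 then cp n (k-1) else 0)) = Ptot n"
    unfolding Ptot_def by (subst sum.atMost_Suc_shift) simp
  have b: "(\<Sum>k\<le>Suc n. cp n (Suc k)) + cp n 0 = Ptot n"
  proof -
    have "(\<Sum>k\<le>Suc n. cp n (Suc k)) = (\<Sum>k\<le>n. cp n (Suc k))"
      by (simp add: cp_gt)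
    moreover have "Ptot n = cp n 0 + (\<Sum>k<n. cp n (Suc k))"
      unfolding Ptot_def by (rule sum.atMost_shift)
    moreover have "(\<Sum>k\<le>n. cp n (Suc k)) = (\<Sum>k<n. cp n (Suc k))"
      by (simp add: cp_gt lessThan_Suc_atMost[symmetric])
    ultimately show ?thesis by simp
  qed
  have "Ptot (Suc n) = (\<Sum>k\<le>Suc n. (if k \<ge> 1 then cp n (k-1) else 0)) + (\<Sum>k\<le>Suc n. cp n (Suc k))"
    unfolding Ptot_def cp.simps(2) by (rule sum.distrib)
  thus ?thesis using a b by simp
qed

lemma Ptot_le: "Ptot n \<le> 2^n"
proof (induction n)
  case 0 then show ?case by (simp add: Ptot_def)
next
  case (Suc n) then show ?case using Ptot_rec[of n] by simp
qed

lemma cp_conv: "cp (Suc n) (Suc k) = (\<Sum>a\<le>n. cp a k * cp (n-a) 0)"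
proof (induction n arbitrary: k)
  case 0 then show ?case by simp
next
  case (Suc n)
  have "(\<Sum>a\<le>Suc n. cp a k * cp (Suc n - a) 0)
      = cp 0 k * cp (Suc n) 0 + (\<Sum>a\<le>n. cp (Suc a) k * cp (n - a) 0)"
    by (subst sum.atMost_Suc_shift) simp
  also have "(\<Sum>a\<le>n. cp (Suc a) k * cp (n - a) 0)
      = (\<Sum>a\<le>n. (if k \<ge> 1 then cp a (k-1) else 0) * cp (n - a) 0) + (\<Sum>a\<le>n. cp a (Suc k) * cp (n - a) 0)"
    by (simp add: sum.distrib algebra_simps)
  finally have e: "(\<Sum>a\<le>Suc n. cp a k * cp (Suc n - a) 0) = cp 0 k * cp (Suc n) 0 +
     ((\<Sum>a\<le>n. (if k \<ge> 1 then cp a (k-1) else 0) * cp (n - a) 0) + (\<Sum>a\<le>n. cp a (Suc k) * cp (n - a) 0))" .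
  show ?case
  proof (cases k)
    case 0
    then show ?thesis using e Suc[of "Suc 0"] by simp
  next
    case (Suc k')
    then show ?thesis using e Suc.IH[of k'] Suc.IH[of "Suc (Suc k')"] by simp
  qed
qed

lemma Ptot_split: "Ptot j = cp j 0 + cp j 1 + cg j"
proof (cases j)
  case 0 then show ?thesis by (simp add: Ptot_def cg_def)
next
  case (Suc m)
  have "{..Suc m} = {0, 1} \<union> {2..Suc m}" by auto
  hence "Ptot j = (\<Sum>k\<in>{0,1} \<union> {2..Suc m}. cp j k)" unfolding Ptot_def Suc by simp
  also have "\<dots> = (\<Sum>k\<in>{0,1}. cp j k) + (\<Sum>k\<in>{2..Suc m}. cp j k)"
    by (rule sum.union_disjoint) auto
  finally show ?thesis unfolding cg_def Suc by simp
qed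

lemma cG_sum_ext: "m \<le> n \<Longrightarrow> (\<Sum>h\<in>{2..n}. cG m h) = (\<Sum>h\<in>{2..m}. cG m h)"
  by (rule sum.mono_neutral_right) (auto simp: cG_gt)

definition cR :: "nat \<Rightarrow> nat \<Rightarrow> nat" where
  "cR n k = (\<Sum>j<n. cg j * cG (n - Suc j) k)"

lemma cR_Suc0: "cR (Suc n) k = cg n * cG 0 k + (\<Sum>j<n. cg j * cG (Suc (n - Suc j)) k)"
proof -
  have "cR (Suc n) k = (\<Sum>j<n. cg j * cG (Suc n - Suc j) k) + cg n * cG 0 k"
    unfolding cR_def by simp
  also have "(\<Sum>j<n. cg j * cG (Suc n - Suc j) k) = (\<Sum>j<n. cg j * cG (Suc (n - Suc j)) k)"
    by (rule sum.cong) (auto simp: Suc_diff_Suc)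
  finally show ?thesis by simp
qed

lemma cR_Suc_Suc: "cR (Suc n) (Suc k) = cR n k + cR n (Suc (Suc k))"
proof -
  have "(\<Sum>j<n. cg j * cG (Suc (n - Suc j)) (Suc k)) = (\<Sum>j<n. cg j * cG (n - Suc j) k + cg j * cG (n - Suc j) (Suc (Suc k)))"
    by (rule sum.cong) (simp_all add: distrib_left)
  also have "\<dots> = cR n k + cR n (Suc (Suc k))" unfolding cR_def by (rule sum.distrib)
  finally show ?thesis using cR_Suc0[of n "Suc k"] by simp
qed

lemma cR_Suc_0: "cR (Suc n) 0 = cg n + cR n 1 + (\<Sum>j<n. cg j * (\<Sum>h\<in>{2..n}. cG (n - Suc j) h))"
proof -
  have "(\<Sum>j<n. cg j * cG (Suc (n - Suc j)) 0) = (\<Sum>j<n. cg j * cG (n - Suc j) 1 + cg j * (\<Sum>h\<in>{2..n}. cG (n - Suc j) h))"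
  proof (rule sum.cong)
    fix j assume "j \<in> {..<n}"
    hence "n - Suc j \<le> n" by simp
    hence e: "(\<Sum>h\<in>{2..n}. cG (n - Suc j) h) = (\<Sum>h\<in>{2..n - Suc j}. cG (n - Suc j) h)"
      by (rule cG_sum_ext)
    show "cg j * cG (Suc (n - Suc j)) 0 = cg j * cG (n - Suc j) 1 + cg j * (\<Sum>h\<in>{2..n}. cG (n - Suc j) h)"
      unfolding e by (simp add: distrib_left)
  qed simp
  also have "\<dots> = cR n 1 + (\<Sum>j<n. cg j * (\<Sum>h\<in>{2..n}. cG (n - Suc j) h))" unfolding cR_def by (rule sum.distrib)
  finally show ?thesis using cR_Suc0[of n 0] by simp
qed

lemma cG_renew: "cG n k = cp n k + cR n k"
proof (induction n arbitrary: k)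
  case 0 then show ?case by (simp add: cR_def)
next
  case (Suc n)
  have sw: "(\<Sum>h\<in>{2..n}. cR n h) = (\<Sum>j<n. cg j * (\<Sum>h\<in>{2..n}. cG (n - Suc j) h))"
    unfolding cR_def by (simp add: sum.swap[of _ "{2..n}"] sum_distrib_left)
  show ?case
  proof (cases k)
    case 0
    have "(\<Sum>h\<in>{2..n}. cG n h) = cg n + (\<Sum>h\<in>{2..n}. cR n h)"
      using Suc.IH by (simp add: sum.distrib cg_def)
    then show ?thesis using 0 Suc.IH[of 1] cR_Suc_0[of n] sw by simp
  next
    case (Suc k')
    then show ?thesis using Suc.IH[of k'] Suc.IH[of "Suc (Suc k')"] cR_Suc_Suc[of n k'] by simp
  qed
qed

lemma cT_renew: "cT n = Ptot n + (\<Sum>j<n. cg j * cT (n - Suc j))"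
proof -
  have "cT n = Ptot n + (\<Sum>k\<le>n. cR n k)"
    unfolding cT_def Ptot_def by (simp add: cG_renew sum.distrib)
  also have "(\<Sum>k\<le>n. cR n k) = (\<Sum>j<n. cg j * (\<Sum>k\<le>n. cG (n - Suc j) k))"
    unfolding cR_def by (simp add: sum.swap[of _ "{..n}"] sum_distrib_left)
  also have "\<dots> = (\<Sum>j<n. cg j * cT (n - Suc j))"
    unfolding cT_def by (intro sum.cong refl arg_cong2[where f="(*)"] sum.mono_neutral_right) (auto simp: cG_gt)
  finally show ?thesis .
qed


lemma walk_append: "walk h (w @ v) = (case walk h w of None \<Rightarrow> None | Some h' \<Rightarrow> walk h' v)"
proof (induction w arbitrary: h)
  case Nil then show ?case by simp
next
  case (Cons s w) then show ?case by (cases s) auto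
qed

lemma walk_le: "walk h w = Some k \<Longrightarrow> k \<le> h + length w"
proof (induction w arbitrary: h)
  case Nil then show ?case by simp
next
  case (Cons s w) then show ?case by (cases s) (fastforce split: if_splits)+
qed

lemma step_UNIV: "(UNIV :: step set) = {Up, Down, Cat}"
  using step.exhaust by auto

lemma finite_len: "finite {w :: step list. length w = n}"
proof -
  have "{w :: step list. length w = n} = {w. set w \<subseteq> UNIV \<and> length w = n}" by auto
  moreover have fU: "finite (UNIV :: step set)" by (simp add: step_UNIV)
  ultimately show ?thesis using finite_lists_length_eq[OF fU, of n] by simp
qed

definition Mk :: "nat \<Rightarrow> nat \<Rightarrow> step list set" where
  "Mk n k = {w. length w = n \<and> walk 0 w = Some k}"

lemma finite_Mk: "finite (Mk n k)"
  unfolding Mk_def by (rule finite_subset[OF _ finite_len[of n]]) auto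

lemma Mk_Suc: "Mk (Suc n) k =
   (\<lambda>w. w @ [Up]) ` (if k \<ge> 1 then Mk n (k-1) else {})
 \<union> (\<lambda>w. w @ [Down]) ` Mk n (Suc k)
 \<union> (\<lambda>w. w @ [Cat]) ` (if k = 0 then (\<Union>h\<in>{2..n}. Mk n h) else {})"
proof (intro equalityI subsetI)
  fix x assume "x \<in> Mk (Suc n) k"
  then obtain y ys where x: "x = ys @ [y]" "length ys = n" and wk: "walk 0 x = Some k"
    unfolding Mk_def by (auto simp: length_Suc_conv_rev)
  then obtain h where h: "walk 0 ys = Some h" by (cases "walk 0 ys") (auto simp: walk_append)
  have wy: "walk h [y] = Some k" using wk h x by (simp add: walk_append)
  have hn: "h \<le> n" using walk_le[OF h] x by simp
  show "x \<in> (\<lambda>w. w @ [Up]) ` (if k \<ge> 1 then Mk n (k-1) else {})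
 \<union> (\<lambda>w. w @ [Down]) ` Mk n (Suc k)
 \<union> (\<lambda>w. w @ [Cat]) ` (if k = 0 then (\<Union>h\<in>{2..n}. Mk n h) else {})"
  proof (cases y)
    case Up then show ?thesis using wy h x by (auto simp: Mk_def split: if_splits)
  next
    case Down then show ?thesis using wy h x by (auto simp: Mk_def split: if_splits)
  next
    case Cat then show ?thesis using wy h x hn by (auto simp: Mk_def split: if_splits)
  qed
next
  fix x assume "x \<in> (\<lambda>w. w @ [Up]) ` (if k \<ge> 1 then Mk n (k-1) else {})
 \<union> (\<lambda>w. w @ [Down]) ` Mk n (Suc k)
 \<union> (\<lambda>w. w @ [Cat]) ` (if k = 0 then (\<Union>h\<in>{2..n}. Mk n h) else {})"
  thus "x \<in> Mk (Suc n) k"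
    by (auto simp: Mk_def walk_append split: if_splits)
qed

lemma card_Mk: "card (Mk n k) = cG n k"
proof (induction n arbitrary: k)
  case 0
  have "Mk 0 k = (if k = 0 then {[]} else {})" unfolding Mk_def by auto
  then show ?case by simp
next
  case (Suc n)
  have inj: "inj (\<lambda>w. w @ [s])" for s :: step by (rule injI) simp
  have fin: "finite ((\<lambda>w. w @ [s]) ` A)" if "finite A" for A s using that by simp
  let ?A = "(\<lambda>w. w @ [Up]) ` (if k \<ge> 1 then Mk n (k-1) else {})"
  let ?B = "(\<lambda>w. w @ [Down]) ` Mk n (Suc k)"
  let ?C = "(\<lambda>w. w @ [Cat]) ` (if k = 0 then (\<Union>h\<in>{2..n}. Mk n h) else {})"
  have fA: "finite ?A" by (simp add: finite_Mk)
  have fB: "finite ?B" by (simp add: finite_Mk)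
  have fC: "finite ?C" by (simp add: finite_Mk)
  have cA: "card ?A = (if k \<ge> 1 then cG n (k-1) else 0)"
    using Suc.IH by (simp add: card_image[OF inj_on_subset[OF inj]])
  have cB: "card ?B = cG n (Suc k)"
    using Suc.IH by (simp add: card_image[OF inj_on_subset[OF inj]])
  have "card (\<Union>h\<in>{2..n}. Mk n h) = (\<Sum>h\<in>{2..n}. card (Mk n h))"
    apply (rule card_UN_disjoint)
      apply simp
     apply (simp add: finite_Mk)
    apply (auto simp: Mk_def)
    done
  hence cU: "card (\<Union>h\<in>{2..n}. Mk n h) = (\<Sum>h\<in>{2..n}. cG n h)" using Suc.IH by simp
  have cC: "card ?C = (if k = 0 then (\<Sum>h\<in>{2..n}. cG n h) else 0)"
    using cU by (simp add: card_image[OF inj_on_subset[OF inj]])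
  have dAB: "?A \<inter> ?B = {}" by auto
  have dABC: "(?A \<union> ?B) \<inter> ?C = {}" by auto
  have "card (Mk (Suc n) k) = card (?A \<union> ?B \<union> ?C)" by (simp only: Mk_Suc)
  also have "\<dots> = card (?A \<union> ?B) + card ?C" using fA fB fC dABC by (simp add: card_Un_disjoint)
  also have "card (?A \<union> ?B) = card ?A + card ?B" using fA fB dAB by (simp add: card_Un_disjoint)
  finally show ?case using cA cB cC by simp
qed

lemma meanders_Mk: "{w \<in> meanders n. walk 0 w = Some k} = Mk n k"
  unfolding meanders_def Mk_def by auto

lemma card_meanders: "card (meanders n) = cT n"
proof -
  have "meanders n = (\<Union>k\<le>n. Mk n k)"
    unfolding meanders_def Mk_def using walk_le by fastforce
  hence "card (meanders n) = (\<Sum>k\<le>n. card (Mk n k))"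
    apply simp
    apply (rule card_UN_disjoint)
      apply simp
     apply (simp add: finite_Mk)
    apply (auto simp: Mk_def)
    done
  thus ?thesis by (simp add: card_Mk cT_def)
qed

lemma final_alt_prob_eq: "final_alt_prob n k = real (cG n k) / real (cT n)"
  unfolding final_alt_prob_def meanders_Mk card_Mk card_meanders ..


lemma tannery_seq:
  fixes a :: "nat \<Rightarrow> nat \<Rightarrow> real"
  assumes lim: "\<And>k. (\<lambda>n. a k n) \<longlonglongrightarrow> b k"
    and bd: "\<And>k n. \<bar>a k n\<bar> \<le> M k" and sM: "summable M"
  shows "(\<lambda>n. \<Sum>k. a k n) \<longlonglongrightarrow> (\<Sum>k. b k)"
proof -
  have "eventually (\<lambda>(k,n). norm (a k n) \<le> M k) (at_top \<times>\<^sub>F sequentially)"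
    using bd by (intro always_eventually) auto
  from tannerys_theorem[OF lim this sM] show ?thesis by simp
qed

lemma subseq_conv:
  fixes x :: "nat \<Rightarrow> real"
  assumes "\<And>n. \<bar>x n\<bar> \<le> B"
  shows "\<exists>r. strict_mono r \<and> (\<exists>l. (\<lambda>i. x (r i)) \<longlonglongrightarrow> l)"
proof -
  obtain r where r: "strict_mono r" "monoseq (\<lambda>n. x (r n))" using seq_monosub by blast
  have "Bseq (\<lambda>n. x (r n))" using assms by (intro BseqI'[of _ B]) auto
  hence "convergent (\<lambda>n. x (r n))" using r by (intro Bseq_monoseq_convergent)
  thus ?thesis using r by (auto simp: convergent_def)
qed

lemma renewal_core:
  fixes f q u r :: "nat \<Rightarrow> real" and Q B L s :: real and \<sigma> :: "nat \<Rightarrow> nat"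
  assumes f_nn: "\<And>m. f m \<ge> 0" and f_small: "\<And>m. m < 3 \<Longrightarrow> f m = 0"
    and f_pos: "\<And>m. m \<ge> 3 \<Longrightarrow> f m > 0" and f_sum: "f sums 1"
    and r_sum: "summable r" and r_nn: "\<And>m. r m \<ge> 0"
    and q_sum: "q sums Q"
    and u_eq: "\<And>n. u n = q n + (\<Sum>j<n. f (Suc j) * u (n - Suc j))"
    and u_nn: "\<And>n. u n \<ge> 0" and u_le: "\<And>n. u n \<le> B"
    and A_id: "\<And>n. (\<Sum>m\<le>n. r m * u (n - m)) = (\<Sum>j\<le>n. q j)"
    and s: "s = 1 \<or> s = -1"
    and \<sigma>: "strict_mono \<sigma>" and lim\<sigma>: "(\<lambda>i. u (\<sigma> i)) \<longlonglongrightarrow> L"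
    and hyp: "\<And>\<tau> l. strict_mono \<tau> \<Longrightarrow> (\<lambda>i. u (\<tau> i)) \<longlonglongrightarrow> l \<Longrightarrow> s * l \<le> s * L"
  shows "L * (\<Sum>m. r m) = Q"
proof -
  have uabs: "\<bar>u n\<bar> \<le> B" for n using u_nn u_le by (simp add: abs_of_nonneg)
  have B0: "0 \<le> B" using uabs[of 0] by linarith
  interpret subseqs "\<lambda>m t. \<exists>l. (\<lambda>i. u (\<sigma> (t i) - m)) \<longlonglongrightarrow> l"
  proof
    fix m and t :: "nat \<Rightarrow> nat" assume "strict_mono t"
    obtain r' where "strict_mono r'" "\<exists>l. (\<lambda>i. u (\<sigma> (t (r' i)) - m)) \<longlonglongrightarrow> l"
      using subseq_conv[of "\<lambda>i. u (\<sigma> (t i) - m)" B] uabs by blast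
    thus "\<exists>r'. strict_mono r' \<and> (\<exists>l. (\<lambda>i. u (\<sigma> ((t \<circ> r') i) - m)) \<longlonglongrightarrow> l)" by auto
  qed
  have diag: "\<exists>l. (\<lambda>i. u (\<sigma> (diagseq i) - m)) \<longlonglongrightarrow> l" for m
  proof -
    obtain l where "(\<lambda>i. u (\<sigma> ((diagseq \<circ> (+) (Suc m)) i) - m)) \<longlonglongrightarrow> l"
    proof (atomize_elim, rule diagseq_holds)
      fix r' :: "nat \<Rightarrow> nat" and t n
      assume "strict_mono r'" "\<exists>l. (\<lambda>i. u (\<sigma> (t i) - n)) \<longlonglongrightarrow> l"
      then obtain l where "(\<lambda>i. u (\<sigma> (t i) - n)) \<longlonglongrightarrow> l" by blast
      from LIMSEQ_subseq_LIMSEQ[OF this \<open>strict_mono r'\<close>]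
      show "\<exists>l. (\<lambda>i. u (\<sigma> ((t \<circ> r') i) - n)) \<longlonglongrightarrow> l" by (auto simp: o_def)
    qed
    hence "(\<lambda>i. u (\<sigma> (diagseq (i + Suc m)) - m)) \<longlonglongrightarrow> l" by (simp add: o_def add.commute)
    hence "(\<lambda>i. u (\<sigma> (diagseq i) - m)) \<longlonglongrightarrow> l" by (rule LIMSEQ_offset)
    thus ?thesis ..
  qed
  define \<tau> where "\<tau> = \<sigma> \<circ> diagseq"
  have \<tau>: "strict_mono \<tau>" unfolding \<tau>_def using \<sigma> subseq_diagseq by (rule strict_mono_o)
  have \<tau>ge: "i \<le> \<tau> i" for i using seq_suble[OF \<tau>] .
  define Lm where "Lm m = lim (\<lambda>i. u (\<tau> i - m))" for m
  have Lm: "(\<lambda>i. u (\<tau> i - m)) \<longlonglongrightarrow> Lm m" for m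
  proof -
    have "convergent (\<lambda>i. u (\<tau> i - m))" using diag[of m] unfolding convergent_def \<tau>_def by (simp add: o_def)
    thus ?thesis unfolding Lm_def by (rule convergent_LIMSEQ_iff[THEN iffD1])
  qed
  have L0: "Lm 0 = L"
  proof -
    have "(\<lambda>i. u (\<tau> i)) \<longlonglongrightarrow> L" unfolding \<tau>_def
      using LIMSEQ_subseq_LIMSEQ[OF lim\<sigma> subseq_diagseq] by (simp add: o_def)
    thus ?thesis using Lm[of 0] LIMSEQ_unique by auto
  qed
  have Lm_le: "s * Lm m \<le> s * L" for m
  proof -
    define \<tau>' where "\<tau>' i = \<tau> (i + m) - m" for i
    have "strict_mono \<tau>'" unfolding strict_mono_Suc_iff \<tau>'_def
    proof
      fix n
      have "\<tau> (n + m) < \<tau> (Suc n + m)" using \<tau> by (simp add: strict_mono_Suc_iff)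
      moreover have "m \<le> \<tau> (n + m)" using \<tau>ge[of "n+m"] by simp
      ultimately show "\<tau> (n + m) - m < \<tau> (Suc n + m) - m" by simp
    qed
    moreover have "(\<lambda>i. u (\<tau>' i)) \<longlonglongrightarrow> Lm m"
      unfolding \<tau>'_def using LIMSEQ_ignore_initial_segment[OF Lm[of m], of m] by simp
    ultimately show ?thesis using hyp by blast
  qed
  have fsum_s: "summable (\<lambda>j. f (Suc j))" using f_sum summable_Suc_iff sums_summable by blast
  have fS1: "(\<Sum>j. f (Suc j)) = 1"
    using suminf_split_head[of f] f_sum f_small[of 0] by (simp add: sums_iff)
  have q0: "q \<longlonglongrightarrow> 0" using q_sum summable_LIMSEQ_zero sums_summable by blast
  have Lrec: "Lm m = (\<Sum>j. f (Suc j) * Lm (m + Suc j))" for m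
  proof -
    define a where "a j i = (if j < \<tau> i - m then f (Suc j) * u (\<tau> i - m - Suc j) else 0)" for j i
    have lima: "(\<lambda>i. a j i) \<longlonglongrightarrow> f (Suc j) * Lm (m + Suc j)" for j
    proof -
      have ev: "eventually (\<lambda>i. f (Suc j) * u (\<tau> i - (m + Suc j)) = a j i) sequentially"
        unfolding eventually_sequentially a_def
        by (rule exI[of _ "Suc (m + j)"]) (auto dest: order_trans[OF _ \<tau>ge])
      show ?thesis by (rule Lim_transform_eventually[OF tendsto_mult_left[OF Lm] ev])
    qed
    have bd: "\<bar>a j i\<bar> \<le> f (Suc j) * B" for j i
      unfolding a_def using f_nn uabs B0 by (auto simp: abs_mult intro: mult_left_mono)
    have sM: "summable (\<lambda>j. f (Suc j) * B)" using fsum_s by (rule summable_mult2)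
    have T: "(\<lambda>i. \<Sum>j. a j i) \<longlonglongrightarrow> (\<Sum>j. f (Suc j) * Lm (m + Suc j))"
      by (rule tannery_seq[OF lima bd sM])
    have e: "(\<Sum>j. a j i) = u (\<tau> i - m) - q (\<tau> i - m)" for i
    proof -
      have "(\<Sum>j. a j i) = (\<Sum>j<\<tau> i - m. a j i)" by (rule suminf_finite) (auto simp: a_def)
      also have "\<dots> = (\<Sum>j<\<tau> i - m. f (Suc j) * u (\<tau> i - m - Suc j))"
        by (rule sum.cong) (auto simp: a_def)
      finally show ?thesis using u_eq[of "\<tau> i - m"] by simp
    qed
    have qlim: "(\<lambda>i. q (\<tau> i - m)) \<longlonglongrightarrow> 0"
    proof -
      have "(\<lambda>n. q (n - m)) \<longlonglongrightarrow> 0"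
        by (rule filterlim_compose[OF q0 filterlim_minus_const_nat_at_top])
      from LIMSEQ_subseq_LIMSEQ[OF this \<tau>] show ?thesis by (simp add: o_def)
    qed
    have "(\<lambda>i. u (\<tau> i - m) - q (\<tau> i - m)) \<longlonglongrightarrow> Lm m - 0"
      by (intro tendsto_diff Lm qlim)
    hence "(\<lambda>i. \<Sum>j. a j i) \<longlonglongrightarrow> Lm m" using e by simp
    thus ?thesis using T LIMSEQ_unique by blast
  qed
  have Lm_abs: "\<bar>Lm m\<bar> \<le> B" for m
  proof -
    have "Lm m \<le> B" by (rule tendsto_upperbound[OF Lm]) (auto simp: u_le)
    moreover have "0 \<le> Lm m" by (rule tendsto_lowerbound[OF Lm]) (auto simp: u_nn)
    ultimately show ?thesis by simp
  qed
  have sl: "summable (\<lambda>j. f (Suc j) * Lm (k + Suc j))" for k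
    by (rule summable_comparison_test[OF _ summable_mult2[OF fsum_s, of B]])
       (use f_nn Lm_abs in \<open>auto simp: abs_mult intro!: mult_left_mono\<close>)
  have Lbig: "Lm n = L" if "n \<ge> 3" for n
  proof -
    have h: "L = (\<Sum>j. f (Suc j) * Lm (Suc j))" using Lrec[of 0] L0 by simp
    have sl0: "summable (\<lambda>j. f (Suc j) * Lm (Suc j))" using sl[of 0] by simp
    have "(\<Sum>j. f (Suc j) * (s * L - s * Lm (Suc j))) = (\<Sum>j. s * L * f (Suc j) - s * (f (Suc j) * Lm (Suc j)))"
      by (simp add: algebra_simps)
    also have "\<dots> = s * L * (\<Sum>j. f (Suc j)) - s * (\<Sum>j. f (Suc j) * Lm (Suc j))"
    proof -
      have "(\<Sum>j. s * L * f (Suc j) - s * (f (Suc j) * Lm (Suc j))) = (\<Sum>j. s * L * f (Suc j)) - (\<Sum>j. s * (f (Suc j) * Lm (Suc j)))"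
        by (rule suminf_diff[symmetric]) (intro summable_mult fsum_s sl0)+
      thus ?thesis using suminf_mult[OF fsum_s, of "s*L"] suminf_mult[OF sl0, of s] by simp
    qed
    also have "\<dots> = 0" using fS1 h by simp
    finally have z: "(\<Sum>j. f (Suc j) * (s * L - s * Lm (Suc j))) = 0" .
    have sm: "summable (\<lambda>j. f (Suc j) * (s * L - s * Lm (Suc j)))"
    proof -
      have "summable (\<lambda>j. s * L * f (Suc j) - s * (f (Suc j) * Lm (Suc j)))"
        using fsum_s sl0 by (intro summable_diff summable_mult)
      thus ?thesis by (simp add: algebra_simps)
    qed
    have nn: "0 \<le> f (Suc j) * (s * L - s * Lm (Suc j))" for j
      using f_nn Lm_le[of "Suc j"] by simp
    have "f (Suc j) * (s * L - s * Lm (Suc j)) = 0" for j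
      using suminf_eq_zero_iff[OF sm nn] z by blast
    moreover obtain j where j: "n = Suc j" using \<open>n \<ge> 3\<close> by (cases n) auto
    ultimately have "f n * (s * L - s * Lm n) = 0" by simp
    moreover have "f n > 0" using f_pos that .
    ultimately have "s * L = s * Lm n" by simp
    thus ?thesis using s by auto
  qed
  have Lall: "Lm m = L" for m
  proof -
    have "Lm m = (\<Sum>j. f (Suc j) * Lm (m + Suc j))" by (rule Lrec)
    also have "\<dots> = (\<Sum>j. f (Suc j) * L)"
    proof (rule suminf_cong)
      fix j show "f (Suc j) * Lm (m + Suc j) = f (Suc j) * L"
        by (cases "Suc j < 3") (auto simp: f_small Lbig)
    qed
    also have "\<dots> = L" using fS1 by (simp add: suminf_mult2[OF fsum_s, symmetric])
    finally show ?thesis .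
  qed
  define b where "b m i = (if m \<le> \<tau> i then r m * u (\<tau> i - m) else 0)" for m i
  have limb: "(\<lambda>i. b m i) \<longlonglongrightarrow> r m * L" for m
  proof -
    have ev: "eventually (\<lambda>i. r m * u (\<tau> i - m) = b m i) sequentially"
      unfolding eventually_sequentially b_def
      by (rule exI[of _ m]) (auto dest: order_trans[OF _ \<tau>ge])
    show ?thesis using Lim_transform_eventually[OF tendsto_mult_left[OF Lm] ev] Lall by simp
  qed
  have bdb: "\<bar>b m i\<bar> \<le> r m * B" for m i
    unfolding b_def using r_nn uabs B0 by (auto simp: abs_mult intro: mult_left_mono)
  have T: "(\<lambda>i. \<Sum>m. b m i) \<longlonglongrightarrow> (\<Sum>m. r m * L)"
    by (rule tannery_seq[OF limb bdb summable_mult2[OF r_sum]])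
  have eb: "(\<Sum>m. b m i) = (\<Sum>j\<le>\<tau> i. q j)" for i
  proof -
    have "(\<Sum>m. b m i) = (\<Sum>m\<le>\<tau> i. b m i)" by (rule suminf_finite) (auto simp: b_def)
    also have "\<dots> = (\<Sum>m\<le>\<tau> i. r m * u (\<tau> i - m))" by (rule sum.cong) (auto simp: b_def)
    finally show ?thesis using A_id by simp
  qed
  have "(\<lambda>n. \<Sum>j\<le>n. q j) \<longlonglongrightarrow> Q" using q_sum sums_def_le by blast
  from LIMSEQ_subseq_LIMSEQ[OF this \<tau>]
  have "(\<lambda>i. \<Sum>m. b m i) \<longlonglongrightarrow> Q" using eb by (simp add: o_def)
  hence "(\<Sum>m. r m * L) = Q" using T LIMSEQ_unique by blast
  thus ?thesis using suminf_mult2[OF r_sum, of L] by (simp add: mult.commute)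
qed


lemma renewal:
  fixes f q u :: "nat \<Rightarrow> real" and Q :: real
  assumes f_nn: "\<And>m. f m \<ge> 0" and f_small: "\<And>m. m < 3 \<Longrightarrow> f m = 0"
    and f_pos: "\<And>m. m \<ge> 3 \<Longrightarrow> f m > 0" and f_sum: "f sums 1"
    and r_sum: "summable (\<lambda>m. 1 - (\<Sum>j\<le>m. f j))"
    and q_nn: "\<And>n. q n \<ge> 0" and q_sum: "q sums Q"
    and u_eq: "\<And>n. u n = q n + (\<Sum>j<n. f (Suc j) * u (n - Suc j))"
  shows "u \<longlonglongrightarrow> Q / (\<Sum>m. 1 - (\<Sum>j\<le>m. f j))"
proof -
  define r where "r m = 1 - (\<Sum>j\<le>m. f j)" for m
  have r_sum': "summable r" using r_sum unfolding r_def .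
  have fs: "summable f" using f_sum sums_summable by blast
  have r_nn: "r m \<ge> 0" for m
  proof -
    have "(\<Sum>j\<le>m. f j) \<le> suminf f" by (rule sum_le_suminf[OF fs]) (auto simp: f_nn)
    thus ?thesis using f_sum sums_unique unfolding r_def by fastforce
  qed
  have r0: "r 0 = 1" unfolding r_def using f_small[of 0] by simp
  have r_Suc: "r (Suc m) = r m - f (Suc m)" for m unfolding r_def by simp
  have u_nn: "u n \<ge> 0" for n
  proof (induction n rule: less_induct)
    case (less n)
    have "0 \<le> (\<Sum>j<n. f (Suc j) * u (n - Suc j))"
      by (rule sum_nonneg) (use less f_nn in auto)
    thus ?case using u_eq[of n] q_nn[of n] by simp
  qed
  have A_id: "(\<Sum>m\<le>n. r m * u (n - m)) = (\<Sum>j\<le>n. q j)" for n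
  proof (induction n)
    case 0 then show ?case using u_eq[of 0] r0 by simp
  next
    case (Suc n)
    have "(\<Sum>m\<le>Suc n. r m * u (Suc n - m)) = r 0 * u (Suc n) + (\<Sum>m\<le>n. r (Suc m) * u (n - m))"
      by (subst sum.atMost_Suc_shift) simp
    also have "(\<Sum>m\<le>n. r (Suc m) * u (n - m)) = (\<Sum>m\<le>n. r m * u (n - m)) - (\<Sum>m\<le>n. f (Suc m) * u (n - m))"
      by (simp add: r_Suc algebra_simps sum_subtractf)
    also have "(\<Sum>m\<le>n. f (Suc m) * u (n - m)) = u (Suc n) - q (Suc n)"
      using u_eq[of "Suc n"] by (simp add: lessThan_Suc_atMost)
    finally show ?case using Suc r0 by simp
  qed
  have qle: "(\<Sum>j\<le>n. q j) \<le> Q" for n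
    using sum_le_suminf[OF sums_summable[OF q_sum], of "{..n}"] q_nn sums_unique[OF q_sum] by auto
  have u_le: "u n \<le> Q" for n
  proof -
    have "r 0 * u (n - 0) \<le> (\<Sum>m\<le>n. r m * u (n - m))"
      by (rule member_le_sum) (auto intro: mult_nonneg_nonneg r_nn u_nn)
    thus ?thesis using A_id[of n] qle[of n] r0 by simp
  qed
  have mu: "(\<Sum>m. r m) \<ge> 1"
    using sum_le_suminf[OF r_sum', of "{0}"] r_nn r0 by auto
  define U where "U n = ereal (u n)" for n
  obtain \<sigma> where \<sigma>: "strict_mono \<sigma>" "(U \<circ> \<sigma>) \<longlonglongrightarrow> limsup U"
    using limsup_subseq_lim by blast
  have "limsup U \<le> ereal Q"
    by (rule tendsto_upperbound[OF \<sigma>(2)]) (auto simp: U_def u_le)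
  moreover have "ereal 0 \<le> limsup U"
    by (rule tendsto_lowerbound[OF \<sigma>(2)]) (auto simp: U_def u_nn)
  ultimately obtain L where L: "limsup U = ereal L" by (cases "limsup U") auto
  have limL: "(\<lambda>i. u (\<sigma> i)) \<longlonglongrightarrow> L" using \<sigma>(2) unfolding L U_def o_def by simp
  have hypL: "1 * l \<le> 1 * L" if "strict_mono \<tau>" "(\<lambda>i. u (\<tau> i)) \<longlonglongrightarrow> l" for \<tau> l
  proof -
    have "(U \<circ> \<tau>) \<longlonglongrightarrow> ereal l" using that(2) by (simp add: U_def o_def)
    hence "limsup (U \<circ> \<tau>) = ereal l" by (intro lim_imp_Limsup) auto
    moreover have "limsup (U \<circ> \<tau>) \<le> limsup U" by (rule limsup_subseq_mono[OF that(1)])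
    ultimately show ?thesis using L by simp
  qed
  have "L * (\<Sum>m. r m) = Q"
    by (rule renewal_core[OF f_nn f_small f_pos f_sum r_sum' r_nn q_sum u_eq u_nn u_le A_id _ \<sigma>(1) limL hypL]) auto
  hence LQ: "L = Q / (\<Sum>m. r m)" using mu by (simp add: field_simps)
  obtain \<sigma>' where \<sigma>': "strict_mono \<sigma>'" "(U \<circ> \<sigma>') \<longlonglongrightarrow> liminf U"
    using liminf_subseq_lim by blast
  have "liminf U \<le> ereal Q"
    by (rule tendsto_upperbound[OF \<sigma>'(2)]) (auto simp: U_def u_le)
  moreover have "ereal 0 \<le> liminf U"
    by (rule tendsto_lowerbound[OF \<sigma>'(2)]) (auto simp: U_def u_nn)
  ultimately obtain L' where L': "liminf U = ereal L'" by (cases "liminf U") auto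
  have limL': "(\<lambda>i. u (\<sigma>' i)) \<longlonglongrightarrow> L'" using \<sigma>'(2) unfolding L' U_def o_def by simp
  have hypL': "-1 * l \<le> -1 * L'" if "strict_mono \<tau>" "(\<lambda>i. u (\<tau> i)) \<longlonglongrightarrow> l" for \<tau> l
  proof -
    have "(U \<circ> \<tau>) \<longlonglongrightarrow> ereal l" using that(2) by (simp add: U_def o_def)
    hence "liminf (U \<circ> \<tau>) = ereal l" by (intro lim_imp_Liminf) auto
    moreover have "liminf U \<le> liminf (U \<circ> \<tau>)" by (rule liminf_subseq_mono[OF that(1)])
    ultimately show ?thesis using L' by simp
  qed
  have "L' * (\<Sum>m. r m) = Q"
    by (rule renewal_core[OF f_nn f_small f_pos f_sum r_sum' r_nn q_sum u_eq u_nn u_le A_id _ \<sigma>'(1) limL' hypL']) auto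
  hence LQ': "L' = Q / (\<Sum>m. r m)" using mu by (simp add: field_simps)
  have "u \<longlonglongrightarrow> Q / (\<Sum>m. r m)"
  proof (rule limsup_le_liminf_real)
    show "limsup u \<le> ereal (Q / (\<Sum>m. r m))" using L LQ unfolding U_def by (simp add: o_def)
    show "ereal (Q / (\<Sum>m. r m)) \<le> liminf u" using L' LQ' unfolding U_def by (simp add: o_def)
  qed
  thus ?thesis unfolding r_def .
qed


context
  fixes l :: real
  assumes l_pos: "l > 0" and l_eq: "l^3 + l - 1 = 0"
begin

lemma rho_facts: "l^2 > 0" "2 * l^2 < 1" "l < 1" "l > 1/2"
  using lam_bounds[OF l_pos l_eq] l_pos by auto

lemma geo_sum: "summable (\<lambda>n. (2 * l^2) ^ n)"
  using rho_facts by (intro summable_geometric) auto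

lemma cp_ser_bd: "\<bar>(l^2)^n * real (cp n k)\<bar> \<le> (2 * l^2)^n"
proof -
  have "real (cp n k) \<le> 2^n" using cp_le[of n k] by (simp add: of_nat_le_iff[symmetric] del: of_nat_le_iff)
  hence "(l^2)^n * real (cp n k) \<le> (l^2)^n * 2^n" by (intro mult_left_mono) auto
  thus ?thesis by (simp add: power_mult_distrib mult.commute)
qed

lemma Ptot_ser_bd: "\<bar>(l^2)^n * real (Ptot n)\<bar> \<le> (2 * l^2)^n"
proof -
  have "real (Ptot n) \<le> 2^n" using Ptot_le[of n] by (simp add: of_nat_le_iff[symmetric] del: of_nat_le_iff)
  hence "(l^2)^n * real (Ptot n) \<le> (l^2)^n * 2^n" by (intro mult_left_mono) auto
  thus ?thesis by (simp add: power_mult_distrib mult.commute)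
qed

lemma summable_cp: "summable (\<lambda>n. (l^2)^n * real (cp n k))"
  by (rule summable_comparison_test[OF _ geo_sum]) (use cp_ser_bd in auto)

lemma summable_Ptot: "summable (\<lambda>n. (l^2)^n * real (Ptot n))"
  by (rule summable_comparison_test[OF _ geo_sum]) (use Ptot_ser_bd in auto)

definition Sk :: "nat \<Rightarrow> real" where "Sk k = (\<Sum>n. (l^2)^n * real (cp n k))"
definition Stot :: real where "Stot = (\<Sum>n. (l^2)^n * real (Ptot n))"

lemma Sk_sums: "(\<lambda>n. (l^2)^n * real (cp n k)) sums Sk k"
  unfolding Sk_def by (rule summable_sums[OF summable_cp])

lemma Stot_sums: "(\<lambda>n. (l^2)^n * real (Ptot n)) sums Stot"
  unfolding Stot_def by (rule summable_sums[OF summable_Ptot])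

lemma Sk0_rec: "Sk 0 = 1 + l^2 * Sk 1"
proof -
  have "(\<Sum>n. (l^2)^(Suc n) * real (cp (Suc n) 0)) = Sk 0 - 1"
    unfolding Sk_def by (subst suminf_split_head[OF summable_cp]) simp
  moreover have "(\<Sum>n. (l^2)^(Suc n) * real (cp (Suc n) 0)) = l^2 * Sk 1"
    unfolding Sk_def by (subst suminf_mult[OF summable_cp, symmetric]) (simp add: algebra_simps)
  ultimately show ?thesis by simp
qed

lemma Sk_Suc: "Sk (Suc k) = l^2 * Sk k * Sk 0"
proof -
  define g where "g n = (l^2)^n * real (cp n (Suc k))" for n
  define c where "c n = (\<Sum>a\<le>n. ((l^2)^a * real (cp a k)) * ((l^2)^(n-a) * real (cp (n-a) 0)))" for n
  have pt: "g (Suc n) = l^2 * c n" for n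
  proof -
    have cc: "real (cp (Suc n) (Suc k)) = (\<Sum>a\<le>n. real (cp a k) * real (cp (n-a) 0))"
      by (simp only: cp_conv of_nat_sum of_nat_mult)
    have "g (Suc n) = l^2 * (\<Sum>a\<le>n. (l^2)^n * (real (cp a k) * real (cp (n-a) 0)))"
      unfolding g_def cc by (simp add: sum_distrib_left mult.assoc)
    also have "(\<Sum>a\<le>n. (l^2)^n * (real (cp a k) * real (cp (n-a) 0))) = c n"
      unfolding c_def
    proof (rule sum.cong)
      fix a assume "a \<in> {..n}"
      hence "(l^2)^n = (l^2)^a * (l^2)^(n-a)" by (simp add: power_add[symmetric])
      thus "(l^2)^n * (real (cp a k) * real (cp (n-a) 0)) = ((l^2)^a * real (cp a k)) * ((l^2)^(n-a) * real (cp (n-a) 0))"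
        by simp
    qed simp
    finally show ?thesis .
  qed
  have cs: "c sums (Sk k * Sk 0)" unfolding Sk_def c_def
    by (rule Cauchy_product_sums) (use summable_cp in \<open>simp_all add: abs_mult\<close>)
  have "(\<lambda>n. l^2 * c n) sums (l^2 * (Sk k * Sk 0))" by (rule sums_mult[OF cs])
  hence "(\<lambda>n. g (Suc n)) sums (l^2 * (Sk k * Sk 0))" by (simp only: pt)
  hence "g sums (l^2 * (Sk k * Sk 0) + g 0)" by (rule sums_Suc_iff[THEN iffD1])
  moreover have "g 0 = 0" unfolding g_def by simp
  ultimately have "g sums (l^2 * (Sk k * Sk 0))" by simp
  hence "Sk (Suc k) = l^2 * (Sk k * Sk 0)" unfolding Sk_def g_def by (rule sums_unique[symmetric])
  thus ?thesis by simp
qed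

lemma Sk_pow: "Sk k = (l^2 * Sk 0)^k * Sk 0"
  by (induction k) (simp_all add: Sk_Suc algebra_simps)

lemma Sk0_ge: "Sk 0 \<ge> 1"
  using sum_le_suminf[OF summable_cp[of 0], of "{0}"] unfolding Sk_def by auto

lemma Sk_sum_le: "(\<Sum>k\<le>K. Sk k) \<le> Stot"
proof -
  have "(\<Sum>k\<le>K. Sk k) = (\<Sum>n. \<Sum>k\<le>K. (l^2)^n * real (cp n k))"
    unfolding Sk_def by (rule suminf_sum[symmetric]) (rule summable_cp)
  also have "\<dots> \<le> Stot" unfolding Stot_def
  proof (rule suminf_le)
    fix n
    have "(\<Sum>k\<le>K. cp n k) \<le> (\<Sum>k\<le>max K n. cp n k)" by (rule sum_mono2) auto
    also have "\<dots> = Ptot n" unfolding Ptot_def by (rule sum.mono_neutral_right) (auto simp: cp_gt)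
    finally have "real (\<Sum>k\<le>K. cp n k) \<le> real (Ptot n)" by (simp only: of_nat_le_iff)
    thus "(\<Sum>k\<le>K. (l^2)^n * real (cp n k)) \<le> (l^2)^n * real (Ptot n)"
      by (simp only: sum_distrib_left[symmetric] of_nat_sum[symmetric]) (simp add: mult_left_mono)
  qed (use summable_Ptot in \<open>auto intro: summable_sum summable_cp\<close>)
  finally show ?thesis .
qed

lemma t_lt1: "l^2 * Sk 0 < 1"
proof (rule ccontr)
  assume "\<not> l^2 * Sk 0 < 1"
  hence t: "l^2 * Sk 0 \<ge> 1" by simp
  have "Sk k \<ge> 1" for k
  proof -
    have "(l^2 * Sk 0)^k \<ge> 1" using t by (rule one_le_power)
    hence "(l^2 * Sk 0)^k * Sk 0 \<ge> 1 * 1" using Sk0_ge by (intro mult_mono) auto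
    thus ?thesis using Sk_pow[of k] by linarith
  qed
  hence ge: "(\<Sum>k\<le>K. (1::real)) \<le> (\<Sum>k\<le>K. Sk k)" for K by (intro sum_mono) auto
  define K where "K = nat \<lceil>Stot\<rceil>"
  have "real (Suc K) \<le> Stot" using ge[of K] Sk_sum_le[of K] by simp
  moreover have "Stot \<le> real K" unfolding K_def by (rule real_nat_ceiling_ge)
  ultimately show False by simp
qed

lemma Sk0_val: "Sk 0 = 1 / l"
proof -
  define t where "t = l^2 * Sk 0"
  have a: "Sk 1 = l^2 * Sk 0 * Sk 0" using Sk_Suc[of 0] by simp
  have e0: "Sk 0 = 1 + l^2 * (l^2 * Sk 0 * Sk 0)" using Sk0_rec unfolding a .
  have E: "l^2 * Sk 0 = l^2 * (1 + l^2 * (l^2 * Sk 0 * Sk 0))" using e0 by (rule arg_cong)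
  have F: "l^2 + l^2 * t^2 = l^2 * (1 + l^2 * (l^2 * Sk 0 * Sk 0))"
    unfolding t_def by (simp add: algebra_simps power2_eq_square)
  have E': "t = l^2 * (1 + l^2 * (l^2 * Sk 0 * Sk 0))" unfolding t_def by (rule E)
  have ht: "t = l^2 + l^2 * t^2" by (rule trans[OF E' F[symmetric]])
  have l3: "l^3 = 1 - l" using l_eq by simp
  have "(t - l) * (l^2 * t - l) = l^2 * t^2 - (l + l^3) * t + l^2"
    by (simp add: algebra_simps power2_eq_square power3_eq_cube)
  also have "\<dots> = l^2 * t^2 - t + l^2" using l3 by simp
  also have "\<dots> = 0" using ht by linarith
  finally have z: "(t - l) * (l^2 * t - l) = 0" .
  have t0: "t \<ge> 0" unfolding t_def using Sk0_ge by simp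
  have t1: "t < 1" unfolding t_def by (rule t_lt1)
  have "l * t \<le> 1 * t" using rho_facts t0 by (intro mult_right_mono) auto
  hence "l * t < 1" using t1 by simp
  hence "l * (l * t) < l * 1" using l_pos by (intro mult_strict_left_mono) auto
  hence "l^2 * t - l < 0" by (simp add: power2_eq_square algebra_simps)
  hence "t = l" using z by simp
  hence "l^2 * Sk 0 = l" unfolding t_def .
  thus ?thesis using l_pos by (simp add: field_simps power2_eq_square)
qed

lemma Sk_val: "Sk k = l^k / l"
proof -
  have "l^2 * Sk 0 = l" using Sk0_val l_pos by (simp add: power2_eq_square)
  thus ?thesis using Sk_pow[of k] Sk0_val by simp
qed

lemma Stot_val: "Stot = 1 / (l * (1 - l))"
proof -
  define h where "h n = (l^2)^n * real (Ptot n)" for n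
  define x where "x n = (l^2)^n * real (cp n 0)" for n
  have pt: "h (Suc n) = l^2 * (2 * h n - x n)" for n
  proof -
    have r: "real (Ptot (Suc n)) = 2 * real (Ptot n) - real (cp n 0)"
      using arg_cong[OF Ptot_rec[of n], of real] by simp
    show ?thesis unfolding h_def x_def r by (simp add: algebra_simps)
  qed
  have hs: "h sums Stot" unfolding h_def Stot_def using summable_Ptot by (rule summable_sums)
  have xs: "x sums Sk 0" unfolding x_def Sk_def using summable_cp by (rule summable_sums)
  have "(\<lambda>n. l^2 * (2 * h n - x n)) sums (l^2 * (2 * Stot - Sk 0))"
    by (intro sums_mult sums_diff hs xs)
  hence "(\<lambda>n. h (Suc n)) sums (l^2 * (2 * Stot - Sk 0))" by (simp only: pt)
  hence "h sums (l^2 * (2 * Stot - Sk 0) + h 0)" by (rule sums_Suc_iff[THEN iffD1])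
  moreover have "h 0 = 1" unfolding h_def by (simp add: Ptot_def)
  ultimately have "Stot = l^2 * (2 * Stot - Sk 0) + 1" using hs sums_unique2 by fastforce
  hence "Stot = l^2 * (2 * Stot - 1 / l) + 1" using Sk0_val by simp
  hence "Stot = 2 * l^2 * Stot - l^2 * (1/l) + 1" by (simp add: algebra_simps)
  also have "l^2 * (1/l) = l" using l_pos by (simp add: power2_eq_square)
  finally have "Stot = 2 * l^2 * Stot - l + 1" .
  hence e: "Stot * (1 - 2 * l^2) = 1 - l" by (simp add: algebra_simps)
  have l3: "l^3 = 1 - l" using l_eq by simp
  have "(1 - l) * (l * (1 - l)) = l - 2 * l^2 + l^3"
    by (simp add: algebra_simps power2_eq_square power3_eq_cube)
  hence f: "(1 - l) * (l * (1 - l)) = 1 - 2 * l^2" using l3 by simp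
  have nz: "1 - 2 * l^2 \<noteq> 0" using rho_facts by simp
  have "Stot = (1 - l) / (1 - 2 * l^2)" using e nz by (simp add: field_simps)
  also have "\<dots> = (1 - l) / ((1 - l) * (l * (1 - l)))" using f by simp
  also have "\<dots> = 1 / (l * (1 - l))" using rho_facts by simp
  finally show ?thesis .
qed

end


context
  fixes l :: real
  assumes l_pos: "l > 0" and l_eq: "l^3 + l - 1 = 0"
begin

definition ff :: "nat \<Rightarrow> real" where
  "ff m = (if m = 0 then 0 else (l^2)^m * real (cg (m - 1)))"

lemma cg_le_Ptot: "cg j \<le> Ptot j" using Ptot_split[of j] by simp

lemma ff_nn: "ff m \<ge> 0" unfolding ff_def by simp

lemma ff_small: "m < 3 \<Longrightarrow> ff m = 0"
  unfolding ff_def cg_def by (cases m) (auto simp: less_Suc_eq)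

lemma ff_pos: "m \<ge> 3 \<Longrightarrow> ff m > 0"
proof -
  assume m: "m \<ge> 3"
  have "cp (m-1) (m-1) \<le> cg (m - 1)" unfolding cg_def
    by (rule member_le_sum) (use m in auto)
  hence "cg (m - 1) \<ge> 1" by (simp add: cp_diag)
  thus ?thesis unfolding ff_def using m rho_facts[OF l_pos l_eq] by simp
qed

lemma ff_bd: "ff j \<le> (2 * l^2)^j"
proof (cases j)
  case 0 then show ?thesis by (simp add: ff_def)
next
  case (Suc i)
  have "real (cg i) \<le> 2^i" using order_trans[OF cg_le_Ptot Ptot_le, of i]
    by (simp add: of_nat_le_iff[symmetric] del: of_nat_le_iff)
  also have "\<dots> \<le> 2^j" using Suc by simp
  finally have "(l^2)^j * real (cg i) \<le> (l^2)^j * 2^j" by (intro mult_left_mono) auto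
  also have "(l^2)^j * 2^j = (2 * l^2)^j" by (simp add: power_mult_distrib)
  also have "(l^2)^j * real (cg i) = ff j" using Suc by (simp add: ff_def)
  finally show ?thesis .
qed

lemma ff_sum: "ff sums 1"
proof -
  have e: "ff (Suc m) = l^2 * ((l^2)^m * real (Ptot m) - (l^2)^m * real (cp m 0) - (l^2)^m * real (cp m 1))" for m
  proof -
    have r: "real (cg m) = real (Ptot m) - real (cp m 0) - real (cp m 1)"
      using arg_cong[OF Ptot_split[of m], of real] by simp
    have "ff (Suc m) = (l^2)^(Suc m) * real (cg m)" by (simp add: ff_def)
    thus ?thesis unfolding r by (simp add: algebra_simps)
  qed
  have s1: "(\<lambda>m. (l^2)^m * real (Ptot m)) sums Stot l" by (rule Stot_sums[OF l_pos l_eq])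
  have s2: "(\<lambda>m. (l^2)^m * real (cp m k)) sums Sk l k" for k by (rule Sk_sums[OF l_pos l_eq])
  have "(\<lambda>m. l^2 * ((l^2)^m * real (Ptot m) - (l^2)^m * real (cp m 0) - (l^2)^m * real (cp m 1)))
     sums (l^2 * (Stot l - Sk l 0 - Sk l 1))"
    by (intro sums_mult sums_diff s1 s2)
  hence "(\<lambda>m. ff (Suc m)) sums (l^2 * (Stot l - Sk l 0 - Sk l 1))" by (simp only: e)
  hence "ff sums (l^2 * (Stot l - Sk l 0 - Sk l 1) + ff 0)" by (rule sums_Suc_iff[THEN iffD1])
  moreover have "l^2 * (Stot l - Sk l 0 - Sk l 1) + ff 0 = 1"
  proof -
    have "Sk l 1 = 1" using Sk_val[OF l_pos l_eq, of 1] l_pos by simp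
    moreover have "Sk l 0 = 1 / l" by (rule Sk0_val[OF l_pos l_eq])
    moreover have "Stot l = 1 / (l * (1 - l))" by (rule Stot_val[OF l_pos l_eq])
    moreover have l1: "1 - l > 0" using rho_facts[OF l_pos l_eq] by simp
    moreover have "l^3 = 1 - l" using l_eq by simp
    ultimately show ?thesis using l_pos
    proof -
      assume a1: "Sk l 1 = 1" and a0: "Sk l 0 = 1 / l" and St: "Stot l = 1 / (l * (1 - l))"
        and l1: "1 - l > 0" and l3: "l^3 = 1 - l"
      have A: "l^2 * Stot l = l / (1 - l)" unfolding St using l_pos l1 by (simp add: field_simps power2_eq_square)
      have C: "(1 + l + l^2) * (1 - l) = l" using l3 by (simp add: algebra_simps power2_eq_square power3_eq_cube)
      have B: "l / (1 - l) = 1 + l + l^2" using C l1 by (simp add: field_simps)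
      have D: "l^2 * (1 / l) = l" using l_pos by (simp add: power2_eq_square)
      have "l^2 * (Stot l - Sk l 0 - Sk l 1) = l^2 * Stot l - l^2 * (1 / l) - l^2"
        unfolding a0 a1 by (simp add: algebra_simps)
      also have "\<dots> = 1" unfolding A B D by simp
      finally show ?thesis by (simp add: ff_def)
    qed
  qed
  ultimately show ?thesis by simp
qed

lemma ff_summable: "summable ff" using ff_sum sums_summable by blast

lemma rr_eq: "1 - (\<Sum>j\<le>m. ff j) = (\<Sum>n. ff (n + Suc m))"
  using suminf_split_initial_segment[OF ff_summable, of "Suc m"] sums_unique[OF ff_sum]
  by (simp add: lessThan_Suc_atMost)

lemma rr_summable: "summable (\<lambda>m. 1 - (\<Sum>j\<le>m. ff j))"
proof -
  define q where "q = 2 * l^2"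
  have q: "0 \<le> q" "q < 1" unfolding q_def using rho_facts[OF l_pos l_eq] by auto
  have gs: "summable (\<lambda>n. q ^ n)" using q by (intro summable_geometric) auto
  have fsh: "summable (\<lambda>n. ff (n + k))" for k by (rule summable_iff_shift[THEN iffD2, OF ff_summable])
  have bd: "(\<Sum>n. ff (n + Suc m)) \<le> (\<Sum>n. q^n) * q^(Suc m)" for m
  proof -
    have "(\<Sum>n. ff (n + Suc m)) \<le> (\<Sum>n. q^n * q^(Suc m))"
    proof (rule suminf_le)
      fix n
      have a: "(2*l^2)^(n + Suc m) = q^n * q^(Suc m)" unfolding q_def by (rule power_add)
      show "ff (n + Suc m) \<le> q^n * q^(Suc m)" using ff_bd[of "n + Suc m"] unfolding a .
    qed (rule fsh, rule summable_mult2[OF gs])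
    also have "\<dots> = (\<Sum>n. q^n) * q^(Suc m)" by (rule suminf_mult2[OF gs, symmetric])
    finally show ?thesis .
  qed
  have nn: "0 \<le> (\<Sum>n. ff (n + Suc m))" for m
    by (rule suminf_nonneg[OF fsh]) (rule ff_nn)
  have "summable (\<lambda>m. (\<Sum>n. q^n) * q^(Suc m))"
    by (rule summable_mult) (use summable_mult[OF gs, of q] in simp)
  thus ?thesis unfolding rr_eq
    by (rule summable_comparison_test[rotated]) (use bd nn in \<open>auto simp: abs_of_nonneg\<close>)
qed

lemma rr_nn: "0 \<le> 1 - (\<Sum>j\<le>m. ff j)"
  unfolding rr_eq by (rule suminf_nonneg[OF summable_iff_shift[THEN iffD2, OF ff_summable]]) (rule ff_nn)

lemma renew_G: "(\<lambda>n. (l^2)^n * real (cG n k)) \<longlonglongrightarrow> Sk l k / (\<Sum>m. 1 - (\<Sum>j\<le>m. ff j))"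
proof (rule renewal[OF ff_nn ff_small ff_pos ff_sum rr_summable])
  show "(\<lambda>n. (l^2)^n * real (cp n k)) sums Sk l k"
    by (rule Sk_sums[OF l_pos l_eq])
  show "0 \<le> (l^2)^n * real (cp n k)" for n by simp
  fix n
  have "real (cG n k) = real (cp n k) + (\<Sum>j<n. real (cg j) * real (cG (n - Suc j) k))"
    using arg_cong[OF cG_renew[of n k], of real] unfolding cR_def by simp
  hence "(l^2)^n * real (cG n k) = (l^2)^n * real (cp n k) + (\<Sum>j<n. (l^2)^n * (real (cg j) * real (cG (n - Suc j) k)))"
    by (simp add: algebra_simps sum_distrib_left)
  also have "(\<Sum>j<n. (l^2)^n * (real (cg j) * real (cG (n - Suc j) k))) = (\<Sum>j<n. ff (Suc j) * ((l^2)^(n - Suc j) * real (cG (n - Suc j) k)))"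
  proof (rule sum.cong)
    fix j assume "j \<in> {..<n}"
    then obtain d where d: "n = Suc (j + d)" using less_imp_Suc_add by blast
    hence "(l^2)^n = (l^2)^(Suc j) * (l^2)^(n - Suc j)" by (simp add: power_add)
    thus "(l^2)^n * (real (cg j) * real (cG (n - Suc j) k)) = ff (Suc j) * ((l^2)^(n - Suc j) * real (cG (n - Suc j) k))"
      unfolding ff_def by simp
  qed simp
  finally show "(l^2)^n * real (cG n k) = (l^2)^n * real (cp n k) + (\<Sum>j<n. ff (Suc j) * ((l^2)^(n - Suc j) * real (cG (n - Suc j) k)))" .
qed

lemma renew_T: "(\<lambda>n. (l^2)^n * real (cT n)) \<longlonglongrightarrow> Stot l / (\<Sum>m. 1 - (\<Sum>j\<le>m. ff j))"
proof (rule renewal[OF ff_nn ff_small ff_pos ff_sum rr_summable])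
  show "(\<lambda>n. (l^2)^n * real (Ptot n)) sums Stot l"
    by (rule Stot_sums[OF l_pos l_eq])
  show "0 \<le> (l^2)^n * real (Ptot n)" for n by simp
  fix n
  have "real (cT n) = real (Ptot n) + (\<Sum>j<n. real (cg j) * real (cT (n - Suc j)))"
    using arg_cong[OF cT_renew[of n], of real] by simp
  hence "(l^2)^n * real (cT n) = (l^2)^n * real (Ptot n) + (\<Sum>j<n. (l^2)^n * (real (cg j) * real (cT (n - Suc j))))"
    by (simp add: algebra_simps sum_distrib_left)
  also have "(\<Sum>j<n. (l^2)^n * (real (cg j) * real (cT (n - Suc j)))) = (\<Sum>j<n. ff (Suc j) * ((l^2)^(n - Suc j) * real (cT (n - Suc j))))"
  proof (rule sum.cong)
    fix j assume "j \<in> {..<n}"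
    then obtain d where d: "n = Suc (j + d)" using less_imp_Suc_add by blast
    hence "(l^2)^n = (l^2)^(Suc j) * (l^2)^(n - Suc j)" by (simp add: power_add)
    thus "(l^2)^n * (real (cg j) * real (cT (n - Suc j))) = ff (Suc j) * ((l^2)^(n - Suc j) * real (cT (n - Suc j)))"
      unfolding ff_def by simp
  qed simp
  finally show "(l^2)^n * real (cT n) = (l^2)^n * real (Ptot n) + (\<Sum>j<n. ff (Suc j) * ((l^2)^(n - Suc j) * real (cT (n - Suc j))))" .
qed

lemma limit_main: "(\<lambda>n. final_alt_prob n k) \<longlonglongrightarrow> (1 - l) * l^k"
proof -
  define \<mu> where "\<mu> = (\<Sum>m. 1 - (\<Sum>j\<le>m. ff j))"
  have "(\<Sum>m\<in>{0}. 1 - (\<Sum>j\<le>m. ff j)) \<le> \<mu>" unfolding \<mu>_def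
    by (rule sum_le_suminf[OF rr_summable]) (use rr_nn in auto)
  hence "1 - (\<Sum>j\<le>0. ff j) \<le> \<mu>" by simp
  hence mu: "\<mu> \<ge> 1" using ff_small[of 0] by simp
  have l1: "0 < 1 - l" using rho_facts[OF l_pos l_eq] by simp
  have St: "Stot l = 1 / (l * (1 - l))" by (rule Stot_val[OF l_pos l_eq])
  have Stpos: "Stot l > 0" unfolding St using l_pos l1 by simp
  have "(\<lambda>n. ((l^2)^n * real (cG n k)) / ((l^2)^n * real (cT n))) \<longlonglongrightarrow> (Sk l k / \<mu>) / (Stot l / \<mu>)"
    unfolding \<mu>_def by (rule tendsto_divide[OF renew_G renew_T]) (use Stpos mu in \<open>simp add: \<mu>_def\<close>)
  moreover have "((l^2)^n * real (cG n k)) / ((l^2)^n * real (cT n)) = final_alt_prob n k" for n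
    unfolding final_alt_prob_eq using l_pos by simp
  moreover have "(Sk l k / \<mu>) / (Stot l / \<mu>) = (1 - l) * l^k"
    using mu l_pos l1 unfolding St Sk_val[OF l_pos l_eq] by (simp add: field_simps)
  ultimately show ?thesis by simp
qed

end

theorem corollary4p17:
  fixes lam :: real
  defines "lam \<equiv> root 3 (108 + 12 * sqrt 93) / 6 - 2 / root 3 (108 + 12 * sqrt 93)"
  shows "lam > 0 \<and> lam^3 + lam - 1 = 0
         \<and> (\<forall>x::real. x > 0 \<and> x^3 + x - 1 = 0 \<longrightarrow> x = lam)
         \<and> lam = inverse (v1 rho0)
         \<and> (\<forall>k::nat. (\<lambda>n. final_alt_prob n k) \<longlonglongrightarrow> (1 - lam) * lam^k)"
proof -
  have lf: "lam > 0 \<and> lam^3 + lam - 1 = 0" unfolding lam_def by (rule lam_facts)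
  hence lp: "lam > 0" and le: "lam^3 + lam - 1 = 0" by auto
  have u: "\<forall>x::real. x > 0 \<and> x^3 + x - 1 = 0 \<longrightarrow> x = lam"
    using cube_mono_uniq[OF _ lp _ le] by blast
  have v: "lam = inverse (v1 rho0)" by (rule v1_rho0[OF lp le])
  have w: "\<forall>k::nat. (\<lambda>n. final_alt_prob n k) \<longlonglongrightarrow> (1 - lam) * lam^k"
    using limit_main[OF lp le] by blast
  show ?thesis using lf u v w by blast
qed

end
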